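(* Let $p$ be a prime with $p\equiv 1\pmod 8$, let $n$ be the least integer with $2^n>p$, let $N=2^n$, and let $\theta=\arccos\!\left(1-\frac{N}{p-1}\right)$. For $x\in\{0,1,\ldots,N-1\}$ let $x_0$ be the least significant bit of $x$ and let $f(x)=1$ if $0\le x<p$ and $\left(\frac{x}{p}\right)=-1$, and $f(x)=0$ otherwise. Define amplitudes $\alpha_x=\frac{1}{\sqrt N}e^{i\theta f(x)(1-2x_0)}$ for $0\le x<N$, let $\bar\alpha=\frac{1}{N}\sum_{x=0}^{N-1}\alpha_x$, and let $\beta_x=2\bar\alpha-\alpha_x$ (the result of inversion about the mean, as implemented by a Grover diffusion step). Then $\bar\alpha=\frac{1}{2\sqrt N}$, $\beta_x=\frac{1}{\sqrt N}\bigl(1-e^{i\theta f(x)(1-2x_0)}\bigr)$, $\beta_x=0$ whenever $f(x)=0$, and $|\beta_x|^2=\frac{2}{p-1}$ whenever $f(x)=1$. Consequently, measuring the state $\sum_x\beta_x|x\rangle$ in the computational basis yields a quadratic nonresidue modulo $p$ with probability $1$, uniformly distributed over the $\frac{p-1}{2}$ quadratic nonresidues in $\{1,\ldots,p-1\}$.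
   Context: $\left(\frac{x}{p}\right)$ denotes the Legendre (Jacobi) symbol modulo the odd prime $p$: $1$ for quadratic residues, $-1$ for quadratic nonresidues, $0$ for $x\equiv 0\pmod p$. A quadratic nonresidue modulo $p$ is an integer $a$ coprime to $p$ such that $x^2\equiv a\pmod p$ has no solution. *)

theory Defs
  imports "HOL-Analysis.Analysis" "HOL-Number_Theory.Number_Theory"
begin

definition nbits :: "nat \<Rightarrow> nat" where
  "nbits p = (LEAST n::nat. 2^n > p)"

definition NN :: "nat \<Rightarrow> nat" where
  "NN p = 2 ^ nbits p"

definition theta :: "nat \<Rightarrow> real" where
  "theta p = arccos (1 - real (NN p) / (real p - 1))"

definition fq :: "nat \<Rightarrow> nat \<Rightarrow> nat" where
  "fq p x = (if x < p \<and> Legendre (int x) (int p) = -1 then 1 else 0)"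

definition lsb :: "nat \<Rightarrow> nat" where
  "lsb x = x mod 2"

definition alpha :: "nat \<Rightarrow> nat \<Rightarrow> complex" where
  "alpha p x = complex_of_real (1 / sqrt (real (NN p))) *
     exp (\<i> * complex_of_real (theta p * real (fq p x) * (1 - 2 * real (lsb x))))"

definition alphabar :: "nat \<Rightarrow> complex" where
  "alphabar p = (\<Sum>x<NN p. alpha p x) / of_nat (NN p)"

definition beta :: "nat \<Rightarrow> nat \<Rightarrow> complex" where
  "beta p x = 2 * alphabar p - alpha p x"

end

theory Submission
  imports Defs
begin

lemma minus_one_QR:
  assumes p: "prime p" and m: "p mod 4 = 1"
  shows "QuadRes (int p) (-1)"
proof -
  have p2: "p > 2" using m p prime_ge_2_nat[OF p] by (cases "p = 2") auto
  have e: "[Legendre (-1) (int p) = (-1) ^ ((p - 1) div 2)] (mod int p)"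
    using euler_criterion[OF p p2] by simp
  have "even ((p - 1) div 2)" using m by presburger
  hence "[Legendre (-1) (int p) = 1] (mod int p)" using e by simp
  moreover have "Legendre (-1) (int p) \<in> {-1,0,1}" unfolding Legendre_def by auto
  moreover have "\<not> [-1 = 1] (mod int p)"
  proof
    assume "[-1 = 1] (mod int p)"
    hence "int p dvd 2" by (simp add: cong_iff_dvd_diff)
    hence "p dvd 2" by presburger
    thus False using p2 by (simp add: nat_dvd_not_less)
  qed
  moreover have "\<not> [0 = 1] (mod int p)"
  proof
    assume "[0 = 1] (mod int p)"
    hence "int p dvd 1" by (simp add: cong_iff_dvd_diff)
    thus False using p2 by simp
  qed
  ultimately have "Legendre (-1) (int p) = 1" by auto
  thus ?thesis unfolding Legendre_def by (auto split: if_splits)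
qed

lemma QR_mult:
  assumes "QuadRes m a" "QuadRes m b" shows "QuadRes m (a*b)"
proof -
  obtain y z where "[y^2 = a] (mod m)" "[z^2 = b] (mod m)" using assms unfolding QuadRes_def by blast
  hence "[(y*z)^2 = a*b] (mod m)" by (simp add: power_mult_distrib cong_mult)
  thus ?thesis unfolding QuadRes_def by blast
qed

lemma Q_reflect:
  assumes p: "prime p" and m: "p mod 4 = 1" and x: "x \<in> {1..p-1}" and nq: "\<not> QuadRes (int p) (int x)"
  shows "\<not> QuadRes (int p) (int (p - x))"
proof
  assume "QuadRes (int p) (int (p - x))"
  hence "QuadRes (int p) (-1 * int (p - x))" using QR_mult minus_one_QR[OF p m] by blast
  moreover have "[-1 * int (p - x) = int x] (mod int p)"
  proof -
    have "int (p - x) = int p - int x" using x by auto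
    thus ?thesis by (simp add: cong_iff_dvd_diff)
  qed
  ultimately have "QuadRes (int p) (int x)" unfolding QuadRes_def using cong_trans by blast
  thus False using nq by simp
qed


lemma card_QR:
  assumes p: "prime p" and p2: "p > 2"
  shows "card {x \<in> {1..p-1}. QuadRes (int p) (int x)} = (p - 1) div 2"
proof -
  define h where "h = (p - 1) div 2"
  define g where "g = (\<lambda>x::nat. x^2 mod p)"
  have pi: "prime (int p)" using p by simp
  have inj: "inj_on g {1..h}"
  proof (rule inj_onI)
    fix x y assume x: "x \<in> {1..h}" and y: "y \<in> {1..h}" and e: "g x = g y"
    have "[x^2 = y^2] (mod p)" using e unfolding g_def cong_def .
    hence "[int x^2 = int y^2] (mod int p)" by (metis cong_int_iff of_nat_power)
    hence "int p dvd int x^2 - int y^2" by (simp add: cong_iff_dvd_diff)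
    moreover have "int x^2 - int y^2 = (int x - int y) * (int x + int y)" by (simp add: power2_eq_square algebra_simps)
    ultimately have "int p dvd (int x - int y) * (int x + int y)" by simp
    hence "int p dvd (int x - int y) \<or> int p dvd (int x + int y)" using pi prime_dvd_mult_iff by blast
    moreover have "\<not> int p dvd (int x + int y)"
    proof
      assume "int p dvd (int x + int y)"
      moreover have "int x + int y > 0" "int x + int y < int p" using x y h_def p2 by auto
      ultimately show False using zdvd_imp_le by fastforce
    qed
    moreover have "int x - int y = 0" if "int p dvd (int x - int y)"
    proof (rule ccontr)
      assume "int x - int y \<noteq> 0"
      hence "\<bar>int p\<bar> \<le> \<bar>int x - int y\<bar>" using dvd_imp_le_int that by blast
      moreover have "\<bar>int x - int y\<bar> < int p" using x y h_def p2 by auto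
      ultimately show False by simp
    qed
    ultimately show "x = y" by auto
  qed
  have img: "g ` {1..h} = {x \<in> {1..p-1}. QuadRes (int p) (int x)}"
  proof
    show "g ` {1..h} \<subseteq> {x \<in> {1..p-1}. QuadRes (int p) (int x)}"
    proof
      fix z assume "z \<in> g ` {1..h}"
      then obtain x where x: "x \<in> {1..h}" and z: "z = x^2 mod p" unfolding g_def by auto
      have "\<not> p dvd x" using x h_def p2 by (auto dest: dvd_imp_le)
      hence "\<not> p dvd x^2" using p prime_dvd_power by blast
      hence "z \<noteq> 0" using z by (simp add: dvd_eq_mod_eq_0)
      moreover have "z < p" using z p2 by simp
      moreover have "QuadRes (int p) (int z)"
        unfolding QuadRes_def using z by (auto simp: cong_def of_nat_mod intro!: exI[of _ "int x"])
      ultimately show "z \<in> {x \<in> {1..p-1}. QuadRes (int p) (int x)}" by auto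
    qed
  next
    show "{x \<in> {1..p-1}. QuadRes (int p) (int x)} \<subseteq> g ` {1..h}"
    proof
      fix x assume "x \<in> {x \<in> {1..p-1}. QuadRes (int p) (int x)}"
      hence x: "1 \<le> x" "x < p" and q: "QuadRes (int p) (int x)" by auto
      obtain y where y: "[y^2 = int x] (mod int p)" using q unfolding QuadRes_def by blast
      define r where "r = y mod int p"
      have r0: "0 \<le> r" "r < int p" using p2 unfolding r_def by auto
      have ry: "[r = y] (mod int p)" unfolding r_def cong_def by simp
      hence rx: "[r^2 = int x] (mod int p)" using y cong_pow cong_trans by blast
      have "r \<noteq> 0"
      proof
        assume "r = 0"
        hence "[int x = 0] (mod int p)" using rx by (simp add: cong_sym_eq)
        hence "int p dvd int x" by (simp add: cong_0_iff)
        hence "p dvd x" by simp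
        thus False using x by (auto dest: dvd_imp_le)
      qed
      obtain z where z: "z \<in> {1..h}" "[int z ^2 = int x] (mod int p)"
      proof (cases "nat r \<le> h")
        case True
        show ?thesis by (rule that[of "nat r"]) (use True \<open>r \<noteq> 0\<close> r0 rx in auto)
      next
        case False
        have "[(int p - r)^2 = r^2] (mod int p)"
        proof -
          have "(int p - r)^2 = r^2 + int p * (int p - 2 * r)" by (simp add: power2_eq_square algebra_simps)
          thus ?thesis by (simp add: cong_iff_dvd_diff)
        qed
        hence "[(int p - r)^2 = int x] (mod int p)" using rx cong_trans by blast
        moreover have "int (p - nat r) = int p - r" using r0 by auto
        moreover have "p - nat r \<in> {1..h}"
        proof -
          have "odd p" using p p2 prime_odd_nat by blast
          thus ?thesis using False r0 h_def p2 by (auto elim!: oddE)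
        qed
        ultimately show ?thesis using that[of "p - nat r"] by auto
      qed
      have "[z^2 = x] (mod p)" using z(2) by (metis cong_int_iff of_nat_power)
      hence "g z = x" unfolding g_def cong_def using x by simp
      thus "x \<in> g ` {1..h}" using z(1) by blast
    qed
  qed
  have "card (g ` {1..h}) = h" using card_image[OF inj] by simp
  thus ?thesis using img h_def by simp
qed


lemma nbits_facts:
  assumes "p > 1"
  shows "2 ^ nbits p > p" "nbits p \<ge> 1" "2 ^ (nbits p - 1) \<le> p"
proof -
  have ex: "\<exists>n::nat. 2^n > p" by (rule exI[of _ p]) simp
  show a: "2 ^ nbits p > p" unfolding nbits_def by (rule LeastI_ex[OF ex])
  show b: "nbits p \<ge> 1"
  proof (rule ccontr)
    assume "\<not> 1 \<le> nbits p" hence "nbits p = 0" by simp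
    thus False using a assms by simp
  qed
  have "\<not> 2 ^ (nbits p - 1) > p"
  proof
    assume "2 ^ (nbits p - 1) > p"
    hence "nbits p \<le> nbits p - 1" unfolding nbits_def by (rule Least_le)
    thus False using b by simp
  qed
  thus "2 ^ (nbits p - 1) \<le> p" by simp
qed

lemma NN_bounds:
  assumes p: "prime p" "p > 2"
  shows "NN p > p" "NN p \<le> 2 * p - 2"
proof -
  have f: "2 ^ nbits p > p" "nbits p \<ge> 1" "2 ^ (nbits p - 1) \<le> p" using nbits_facts p prime_gt_1_nat by auto
  show "NN p > p" using f unfolding NN_def by simp
  have e: "NN p = 2 * 2 ^ (nbits p - 1)" unfolding NN_def using f(2)
    by (metis Suc_diff_le diff_Suc_1 power_Suc)
  have odd: "odd p" using p prime_odd_nat by blast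
  have "2 ^ (nbits p - 1) \<noteq> p"
  proof
    assume h: "2 ^ (nbits p - 1) = p"
    show False
    proof (cases "nbits p - 1")
      case 0 thus False using h p by simp
    next
      case (Suc k) thus False using h odd by (metis dvd_triv_left power_Suc)
    qed
  qed
  hence "2 ^ (nbits p - 1) \<le> p - 1" using f(3) by simp
  thus "NN p \<le> 2 * p - 2" using e by simp
qed

lemma cmod_one_minus_exp: "(cmod (1 - exp (\<i> * complex_of_real t)))\<^sup>2 = 2 - 2 * cos t"
proof -
  have "exp (\<i> * complex_of_real t) = cis t" by (simp add: cis_conv_exp)
  hence "(cmod (1 - exp (\<i> * complex_of_real t)))\<^sup>2 = (1 - cos t)^2 + (sin t)^2"
    by (simp add: cmod_power2)
  also have "\<dots> = 2 - 2 * cos t" using sin_cos_squared_add[of t] by (simp add: power2_eq_square algebra_simps)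
  finally show ?thesis .
qed


lemma half_cancel: "(d::real) > 0 \<Longrightarrow> d / 2 * (x / d) = x / 2"
  by (simp add: field_simps)

lemma lin_help: "h * t = a \<Longrightarrow> h * (1 - t) + (N - h) = N - (a::real)"
  by (simp add: right_diff_distrib)

theorem mainTheorem3:
  fixes p :: nat
  assumes "prime p" and "p mod 8 = 1"
  shows "alphabar p = complex_of_real (1 / (2 * sqrt (real (NN p)))) \<and>
    (\<forall>x<NN p. beta p x = complex_of_real (1 / sqrt (real (NN p))) *
           (1 - exp (\<i> * complex_of_real (theta p * real (fq p x) * (1 - 2 * real (lsb x)))))) \<and>
    (\<forall>x<NN p. fq p x = 0 \<longrightarrow> beta p x = 0) \<and>
    (\<forall>x<NN p. fq p x = 1 \<longrightarrow> (cmod (beta p x))\<^sup>2 = 2 / (real p - 1)) \<and>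
    (\<Sum>x<NN p. (cmod (beta p x))\<^sup>2) = 1 \<and>
    {x. x < NN p \<and> beta p x \<noteq> 0} = {x \<in> {1..p-1}. \<not> QuadRes (int p) (int x)} \<and>
    card {x \<in> {1..p-1}. \<not> QuadRes (int p) (int x)} = (p - 1) div 2 \<and>
    (\<forall>x \<in> {x \<in> {1..p-1}. \<not> QuadRes (int p) (int x)}. (cmod (beta p x))\<^sup>2 = 2 / (real p - 1))"
proof -
  note p = assms(1)
  have p2: "p > 2" proof -
    have "p \<ge> 2" using prime_ge_2_nat[OF assms(1)] .
    moreover have "p \<noteq> 2" using assms(2) by auto
    ultimately show ?thesis by simp
  qed
  have p4: "p mod 4 = 1" using assms(2) by presburger
  have oddp: "odd p" using assms(2) by presburger
  define N where "N = NN p"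
  define S where "S = sqrt (real N)"
  define \<theta> where "\<theta> = theta p"
  define Q where "Q = {x \<in> {1..p-1}. \<not> QuadRes (int p) (int x)}"
  define R where "R = {x \<in> {1..p-1}. QuadRes (int p) (int x)}"
  have Nb: "N > p" "N \<le> 2 * p - 2" using NN_bounds[OF p p2] N_def by auto
  have Spos: "S > 0" using Nb S_def by simp
  have SS: "S * S = real N" using S_def by simp
  have cth: "cos \<theta> = 1 - real N / (real p - 1)"
  proof -
    have "real N / (real p - 1) \<le> 2" using Nb p2 by (simp add: divide_simps)
    moreover have "real N / (real p - 1) \<ge> 0" using p2 by simp
    ultimately show ?thesis unfolding \<theta>_def theta_def N_def by (intro cos_arccos) auto
  qed
  have QR: "Q = {1..p-1} - R" unfolding Q_def R_def by auto
  have cQ: "card Q = (p - 1) div 2"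
  proof -
    have "card R = (p - 1) div 2" using card_QR[OF p p2] R_def by simp
    moreover have "R \<subseteq> {1..p-1}" unfolding R_def by auto
    moreover have "card ({1..p-1} - R) = card {1..p-1} - card R"
      by (rule card_Diff_subset) (use calculation in \<open>auto intro: finite_subset\<close>)
    ultimately have "card Q = (p - 1) - (p - 1) div 2" using QR by simp
    thus ?thesis using oddp by (auto elim!: oddE)
  qed
  have rcQ: "real (card Q) = (real p - 1) / 2" using cQ oddp by (auto elim!: oddE)
  have QN: "Q \<subseteq> {..<N}" using Nb unfolding Q_def by auto
  have fQ: "fq p x = (if x \<in> Q then 1 else 0)" for x
  proof -
    have "(x < p \<and> Legendre (int x) (int p) = -1) \<longleftrightarrow> x \<in> Q"
    proof (cases "x < p \<and> x \<noteq> 0")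
      case True
      hence "\<not> [int x = 0] (mod int p)" by (auto simp add: cong_0_iff dest: dvd_imp_le)
      thus ?thesis using True unfolding Legendre_def Q_def by auto
    next
      case False
      moreover have "QuadRes (int p) 0" unfolding QuadRes_def by (auto intro: exI[of _ 0])
      ultimately show ?thesis unfolding Legendre_def Q_def by auto
    qed
    thus ?thesis unfolding fq_def by auto
  qed
  define ee where "ee x = exp (\<i> * complex_of_real (\<theta> * (1 - 2 * real (lsb x))))" for x
  have alpha_eq: "alpha p x = complex_of_real (1 / S) * (if x \<in> Q then ee x else 1)" for x
    unfolding alpha_def ee_def S_def N_def \<theta>_def fQ by auto
  have lsb_cases: "lsb x = 0 \<or> lsb x = 1" for x unfolding lsb_def by auto
  have lsb_ref: "real (lsb (p - x)) = 1 - real (lsb x)" if "x \<in> Q" for x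
  proof -
    have "x < p" using that Q_def by auto
    thus ?thesis unfolding lsb_def using oddp by (auto elim!: oddE simp: mod2_eq_if)
  qed
  have pair: "ee x + ee (p - x) = 2 * complex_of_real (cos \<theta>)" if "x \<in> Q" for x
  proof -
    define a where "a = \<theta> * (1 - 2 * real (lsb x))"
    have "ee (p - x) = exp (- (\<i> * complex_of_real a))"
      unfolding ee_def a_def lsb_ref[OF that] by (simp add: algebra_simps)
    moreover have "ee x = exp (\<i> * complex_of_real a)" unfolding ee_def a_def ..
    ultimately have "ee x + ee (p - x) = 2 * cos (complex_of_real a)" by (simp add: cos_exp_eq)
    also have "\<dots> = 2 * complex_of_real (cos a)" by (simp add: cos_of_real)
    also have "cos a = cos \<theta>" unfolding a_def using lsb_cases[of x] by auto
    finally show ?thesis .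
  qed
  have reflQ: "(\<Sum>x\<in>Q. ee x) = (\<Sum>x\<in>Q. ee (p - x))"
  proof (rule sum.reindex_bij_witness[of _ "\<lambda>x. p - x" "\<lambda>x. p - x"])
    fix x assume "x \<in> Q" thus "p - (p - x) = x" unfolding Q_def by auto
  next
    fix x assume "x \<in> Q" thus "p - x \<in> Q" unfolding Q_def using Q_reflect[OF p p4] by auto
  next
    fix x assume "x \<in> Q" thus "p - (p - x) = x" unfolding Q_def by auto
  next
    fix x assume "x \<in> Q" thus "p - x \<in> Q" unfolding Q_def using Q_reflect[OF p p4] by auto
  qed (auto simp: Q_def)
  have sumee: "(\<Sum>x\<in>Q. ee x) = complex_of_real (real (card Q) * cos \<theta>)"
  proof -
    have "2 * (\<Sum>x\<in>Q. ee x) = (\<Sum>x\<in>Q. ee x + ee (p - x))" using reflQ by (simp add: sum.distrib)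
    also have "\<dots> = (\<Sum>x\<in>Q. 2 * complex_of_real (cos \<theta>))" using pair by (rule sum.cong[OF refl])
    finally show ?thesis by simp
  qed
  have fin: "finite {..<N}" by simp
  have sumalpha: "(\<Sum>x<N. alpha p x) = complex_of_real (1 / S) * ((\<Sum>x\<in>Q. ee x) + of_nat (N - card Q))"
  proof -
    have "(\<Sum>x<N. alpha p x) = complex_of_real (1 / S) * (\<Sum>x<N. (if x \<in> Q then ee x else 1))"
      unfolding alpha_eq by (simp add: sum_distrib_left)
    also have "(\<Sum>x<N. (if x \<in> Q then ee x else 1)) = (\<Sum>x\<in>Q. ee x) + of_nat (card ({..<N} - Q))"
    proof -
      have "{..<N} \<inter> {x. x \<in> Q} = Q" "{..<N} \<inter> - {x. x \<in> Q} = {..<N} - Q" using QN by auto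
      thus ?thesis by (simp add: sum.If_cases)
    qed
    also have "card ({..<N} - Q) = N - card Q" using QN by (simp add: card_Diff_subset finite_subset)
    finally show ?thesis .
  qed
  have key: "real (card Q) * cos \<theta> + (real N - real (card Q)) = real N / 2"
  proof -
    have pm: "real p - 1 > 0" using p2 by simp
    have "(real p - 1) / 2 * (real N / (real p - 1)) = real N / 2"
      using pm half_cancel by blast
    hence "(real p - 1) / 2 * (1 - real N / (real p - 1)) + (real N - (real p - 1) / 2) = real N - real N / 2"
      by (rule lin_help)
    thus ?thesis unfolding cth rcQ by linarith
  qed
  have cQN: "card Q \<le> N" using card_mono[OF finite_lessThan QN] by simp
  have ab: "alphabar p = complex_of_real (1 / (2 * S))"
  proof -
    have "of_nat (N - card Q) = complex_of_real (real N - real (card Q))"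
      using cQN by (simp add: of_nat_diff)
    hence "(\<Sum>x\<in>Q. ee x) + of_nat (N - card Q) = complex_of_real (real N / 2)"
      unfolding sumee key[symmetric] by (simp only: of_real_add)
    hence "(\<Sum>x<N. alpha p x) = complex_of_real (1 / S) * complex_of_real (real N / 2)"
      by (simp only: sumalpha)
    hence "(\<Sum>x<N. alpha p x) = complex_of_real (1 / S * (real N / 2))"
      by (simp only: of_real_mult)
    hence "alphabar p = complex_of_real (1 / S * (real N / 2) / real N)"
      unfolding alphabar_def N_def by simp
    also have "1 / S * (real N / 2) / real N = 1 / (2 * S)" using Nb by simp
    finally show ?thesis .
  qed
  have betaf: "beta p x = complex_of_real (1 / S) *
           (1 - exp (\<i> * complex_of_real (\<theta> * real (fq p x) * (1 - 2 * real (lsb x)))))" for x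
    unfolding beta_def ab alpha_def S_def N_def \<theta>_def by (simp add: algebra_simps)
  have b0: "beta p x = 0" if "x \<notin> Q" for x using that unfolding betaf fQ by simp
  have b1: "(cmod (beta p x))\<^sup>2 = 2 / (real p - 1)" if "x \<in> Q" for x
  proof -
    define a where "a = \<theta> * (1 - 2 * real (lsb x))"
    have "beta p x = complex_of_real (1 / S) * (1 - exp (\<i> * complex_of_real a))"
      unfolding betaf fQ a_def using that by simp
    hence "cmod (beta p x) = (1 / S) * cmod (1 - exp (\<i> * complex_of_real a))"
      using Spos by (simp only: norm_mult norm_of_real) simp
    hence "(cmod (beta p x))\<^sup>2 = (1 / S)^2 * (2 - 2 * cos a)"
      by (simp only: power_mult_distrib cmod_one_minus_exp)
    also have "cos a = cos \<theta>" unfolding a_def using lsb_cases[of x] by auto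
    also have "(1 / S)^2 = 1 / real N" using SS by (simp add: power2_eq_square)
    finally show ?thesis unfolding cth using Nb p2 by (simp add: field_simps)
  qed
  have bne: "beta p x \<noteq> 0" if "x \<in> Q" for x using b1[OF that] p2 by auto
  have sumb: "(\<Sum>x<N. (cmod (beta p x))\<^sup>2) = 1"
  proof -
    have "(\<Sum>x<N. (cmod (beta p x))\<^sup>2) = (\<Sum>x<N. if x \<in> Q then 2 / (real p - 1) else 0)"
      using b0 b1 by (intro sum.cong) auto
    also have "\<dots> = real (card Q) * (2 / (real p - 1))"
      using QN by (simp add: sum.If_cases Int_absorb1 Int_absorb2 Int_commute)
    finally show ?thesis unfolding rcQ using p2 by simp
  qed
  have setq: "{x. x < N \<and> beta p x \<noteq> 0} = Q" using QN b0 bne by auto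
  show ?thesis
    using ab betaf b0 b1 sumb setq cQ fQ
    unfolding N_def[symmetric] S_def[symmetric] \<theta>_def[symmetric] Q_def[symmetric]
    by (auto simp: fQ)
qed

end
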